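(* Let $S$ be an instance of 3-Partition (with $n_1\ge\cdots\ge n_{3m}$) and $w_S$ as defined below. Every accepting computation $\varepsilon\,\|\,w_S\vdash^*\varepsilon\,\|\,\varepsilon$ satisfies the V-Condition: for each $\ell$ with $1\le\ell\le 12m$, the symbols of the second occurrence of $v_\ell$ in $w_S$ are all matched against the corresponding symbols of the first occurrence of $v_\ell$ in $w_S$.
   Context: Queue automaton: a configuration is written $Q\,\|\,x$ ($Q$ = queue contents, $x$ = remaining input); a step from $Q\,\|\,\sigma x$ ($\sigma$ a symbol) goes either to $Q\sigma\,\|\,x$ (push the input symbol) or, if $Q=\sigma Q'$, to $Q'\,\|\,x$ (the input symbol is matched against the leftmost queue symbol, which is popped; that queue symbol was pushed from an earlier input position and the two occurrences are said to be matched). $\vdash^*$ is zero or more steps; $\varepsilon$ is the empty string; an accepting computation of $w$ is a computation $\varepsilon\,\|\,w\vdash^*\varepsilon\,\|\,\varepsilon$. An instance of 3-Partition is a sequence $S=\langle n_i:1\le i\le 3m\rangle$ of natural numbers such that $B=(\sum_{i=1}^{3m}n_i)/m$ is an integer and $B/4<n_i<B/2$ for all $i$; throughout, the $n_i$ are in non-increasing order. Alphabet $\{a_1,a_2,b,e_0,e,c_1,c_2,x,y\}$; $u^i$ is $i$ copies of $u$ concatenated, $\prod_{\ell=1}^k u_\ell=u_1\cdots u_k$. Define $U_\ell=a_1^2b^\ell a_2^2$, $v_\ell=c_1x^\ell y^\ell c_2$, $D_k=U_{n_k}^{3m-k+1}$, $E_k=U_B^{3m-k}\,a_1b^{n_k}a_2\,U_B^{3m-k}$,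 $F_k=U_B^{2(3m-k)}$, $\mathrm{Load}_S=e_0\prod_{i=1}^m(b^{2B}e)$, $\mathrm{Dist}_S=e_0\prod_{i=1}^m((a_1b^Ba_2)^3e)$, $\mathrm{Ver}_S=\prod_{k=1}^{3m}[v_{4k-3}D_kv_{4k-3}\,v_{4k-2}D_kv_{4k-2}\,v_{4k-1}E_kv_{4k-1}\,v_{4k}F_kv_{4k}]$, $w_S=\mathrm{Load}_S\mathrm{Dist}_S\mathrm{Ver}_S$. Each $v_\ell$ ($1\le\ell\le12m$) occurs exactly twice in $w_S$. *)

theory Defs
  imports Complex_Main
begin

text \<open>Queue contents are recorded as lists of input positions (0-based) of the word w;
  the symbol of a queue entry q is w!q.  A configuration is (Q, i): queue Q and
  i input symbols already consumed (remaining input = drop i w).\<close>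

inductive qstep :: "'s list \<Rightarrow> nat list \<times> nat \<Rightarrow> nat list \<times> nat \<Rightarrow> bool" for w where
  push: "i < length w \<Longrightarrow> qstep w (Q, i) (Q @ [i], Suc i)"
| pop:  "i < length w \<Longrightarrow> w ! q = w ! i \<Longrightarrow> qstep w (q # Q, i) (Q, Suc i)"

definition accepting_comp :: "'s list \<Rightarrow> (nat list \<times> nat) list \<Rightarrow> bool" where
  "accepting_comp w cs \<longleftrightarrow> cs \<noteq> [] \<and> hd cs = ([], 0) \<and> last cs = ([], length w) \<and>
     (\<forall>k. Suc k < length cs \<longrightarrow> qstep w (cs ! k) (cs ! Suc k))"

definition matched :: "(nat list \<times> nat) list \<Rightarrow> nat \<Rightarrow> nat \<Rightarrow> bool" where
  "matched cs i j \<longleftrightarrow> (\<exists>k. Suc k < length cs \<and> snd (cs ! k) = j \<and>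
       fst (cs ! k) = i # fst (cs ! Suc k))"

text \<open>ns = <n_1,...,n_{3m}> (n_k = ns!(k-1)), non-increasing.\<close>
definition three_partition_instance :: "nat \<Rightarrow> nat list \<Rightarrow> bool" where
  "three_partition_instance m ns \<longleftrightarrow> m > 0 \<and> length ns = 3 * m \<and> m dvd sum_list ns \<and>
     (\<forall>i < length ns. real (sum_list ns div m) / 4 < real (ns ! i) \<and>
                      real (ns ! i) < real (sum_list ns div m) / 2) \<and>
     sorted_wrt (\<ge>) ns"

definition bound_B :: "nat \<Rightarrow> nat list \<Rightarrow> nat" where
  "bound_B m ns = sum_list ns div m"

datatype sym = SA1 | SA2 | SB | SE0 | SE | SC1 | SC2 | SX | SY

definition pw :: "'a list \<Rightarrow> nat \<Rightarrow> 'a list" where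
  "pw u i = concat (replicate i u)"

definition U_blk :: "nat \<Rightarrow> sym list" where
  "U_blk l = [SA1, SA1] @ replicate l SB @ [SA2, SA2]"

definition v_blk :: "nat \<Rightarrow> sym list" where
  "v_blk l = [SC1] @ replicate l SX @ replicate l SY @ [SC2]"

definition nk :: "nat list \<Rightarrow> nat \<Rightarrow> nat" where
  "nk ns k = ns ! (k - 1)"

definition D_blk :: "nat \<Rightarrow> nat list \<Rightarrow> nat \<Rightarrow> sym list" where
  "D_blk m ns k = pw (U_blk (nk ns k)) (3 * m - k + 1)"

definition E_blk :: "nat \<Rightarrow> nat list \<Rightarrow> nat \<Rightarrow> sym list" where
  "E_blk m ns k = pw (U_blk (bound_B m ns)) (3 * m - k) @ [SA1] @ replicate (nk ns k) SB @ [SA2]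
                  @ pw (U_blk (bound_B m ns)) (3 * m - k)"

definition F_blk :: "nat \<Rightarrow> nat list \<Rightarrow> nat \<Rightarrow> sym list" where
  "F_blk m ns k = pw (U_blk (bound_B m ns)) (2 * (3 * m - k))"

definition Load :: "nat \<Rightarrow> nat list \<Rightarrow> sym list" where
  "Load m ns = [SE0] @ concat (map (\<lambda>i. replicate (2 * bound_B m ns) SB @ [SE]) [1..<m+1])"

definition Dist :: "nat \<Rightarrow> nat list \<Rightarrow> sym list" where
  "Dist m ns = [SE0] @ concat (map (\<lambda>i. pw ([SA1] @ replicate (bound_B m ns) SB @ [SA2]) 3 @ [SE])
                                  [1..<m+1])"

definition Ver :: "nat \<Rightarrow> nat list \<Rightarrow> sym list" where
  "Ver m ns = concat (map (\<lambda>k.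
       v_blk (4*k-3) @ D_blk m ns k @ v_blk (4*k-3) @
       v_blk (4*k-2) @ D_blk m ns k @ v_blk (4*k-2) @
       v_blk (4*k-1) @ E_blk m ns k @ v_blk (4*k-1) @
       v_blk (4*k)   @ F_blk m ns k @ v_blk (4*k)) [1..<3*m+1])"

definition w_S :: "nat \<Rightarrow> nat list \<Rightarrow> sym list" where
  "w_S m ns = Load m ns @ Dist m ns @ Ver m ns"

definition occs :: "'a list \<Rightarrow> 'a list \<Rightarrow> nat set" where
  "occs u w = {p. p + length u \<le> length w \<and> take (length u) (drop p w) = u}"

definition first_occ :: "'a list \<Rightarrow> 'a list \<Rightarrow> nat" where
  "first_occ u w = Min (occs u w)"

definition second_occ :: "'a list \<Rightarrow> 'a list \<Rightarrow> nat" where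
  "second_occ u w = Min (occs u w - {first_occ u w})"

definition V_condition :: "nat \<Rightarrow> nat list \<Rightarrow> (nat list \<times> nat) list \<Rightarrow> bool" where
  "V_condition m ns cs \<longleftrightarrow>
     (\<forall>l. 1 \<le> l \<and> l \<le> 12 * m \<longrightarrow>
        (\<forall>j < length (v_blk l).
           matched cs (first_occ (v_blk l) (w_S m ns) + j) (second_occ (v_blk l) (w_S m ns) + j)))"

end

theory Submission
  imports Defs
begin


inductive qrun :: "sym list \<Rightarrow> sym list \<Rightarrow> sym list \<Rightarrow> bool" where
  qr_nil: "qrun Q [] Q"
| qr_push: "qrun (Q @ [c]) z Q' \<Longrightarrow> qrun Q (c # z) Q'"
| qr_pop: "qrun Q z Q' \<Longrightarrow> qrun (c # Q) (c # z) Q'"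

inductive_cases qrun_ConsE: "qrun Q (c # z) Q'"
inductive_cases qrun_NilE: "qrun Q [] Q'"

lemma qrun_append: "qrun Q z1 Q1 \<Longrightarrow> qrun Q1 z2 Q2 \<Longrightarrow> qrun Q (z1 @ z2) Q2"
  by (induction rule: qrun.induct) (auto intro: qrun.intros)

lemma qrun_split: "qrun Q (z1 @ z2) Q2 \<Longrightarrow> \<exists>Q1. qrun Q z1 Q1 \<and> qrun Q1 z2 Q2"
proof (induction z1 arbitrary: Q)
  case Nil thus ?case by (auto intro: qrun.intros)
next
  case (Cons c z1)
  from Cons.prems have "qrun (Q @ [c]) (z1 @ z2) Q2 \<or> (\<exists>Q0. Q = c # Q0 \<and> qrun Q0 (z1 @ z2) Q2)"
    by (auto elim: qrun_ConsE)
  thus ?case using Cons.IH by (metis append_Cons qrun.intros(2,3))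
qed

lemma qrun_single: "qrun Q [c] Q' \<Longrightarrow> Q' = Q @ [c] \<or> Q = c # Q'"
  by (auto elim!: qrun_ConsE qrun_NilE)

lemma qrun_single_intro: "Q' = Q @ [c] \<or> Q = c # Q' \<Longrightarrow> qrun Q [c] Q'"
  by (auto intro: qrun.intros)

lemma qrun_rep: "qrun Q (replicate n c) Q' \<Longrightarrow> \<exists>p\<le>n. Q @ replicate (n - p) c = replicate p c @ Q'"
proof (induction n arbitrary: Q)
  case 0 thus ?case by (auto elim: qrun_NilE)
next
  case (Suc n)
  from Suc.prems have "qrun (Q @ [c]) (replicate n c) Q' \<or> (\<exists>Q0. Q = c # Q0 \<and> qrun Q0 (replicate n c) Q')"
    by (auto elim: qrun_ConsE)
  thus ?case
  proof
    assume "qrun (Q @ [c]) (replicate n c) Q'"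
    then obtain p where p: "p \<le> n" "(Q @ [c]) @ replicate (n - p) c = replicate p c @ Q'" using Suc.IH by blast
    moreover have "Suc n - p = Suc (n - p)" using \<open>p \<le> n\<close> by simp
    ultimately show ?thesis by (intro exI[of _ p]) (simp add: replicate_app_Cons_same)
  next
    assume "\<exists>Q0. Q = c # Q0 \<and> qrun Q0 (replicate n c) Q'"
    then obtain Q0 where Q0: "Q = c # Q0" "qrun Q0 (replicate n c) Q'" by blast
    then obtain p where "p \<le> n" "Q0 @ replicate (n - p) c = replicate p c @ Q'" using Suc.IH by blast
    thus ?thesis using Q0 by (intro exI[of _ "Suc p"]) auto
  qed
qed

lemma qrun_count: "qrun Q z Q' \<Longrightarrow> even (count_list Q' d + count_list Q d + count_list z d)"
  by (induction rule: qrun.induct) auto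

lemma copy_decomp:
  assumes "qrun S (v_blk L) S'"
  shows "\<exists>S1 S2 S3 p q. (S1 = S @ [SC1] \<or> S = SC1 # S1) \<and> p \<le> L \<and>
    S1 @ replicate (L-p) SX = replicate p SX @ S2 \<and> q \<le> L \<and>
    S2 @ replicate (L-q) SY = replicate q SY @ S3 \<and> (S' = S3 @ [SC2] \<or> S3 = SC2 # S')"
proof -
  have "qrun S ([SC1] @ replicate L SX @ replicate L SY @ [SC2]) S'" using assms by (simp add: v_blk_def)
  then obtain S1 where 1: "qrun S [SC1] S1" and r1: "qrun S1 (replicate L SX @ replicate L SY @ [SC2]) S'"
    by (blast dest: qrun_split)
  from r1 obtain S2 where 2: "qrun S1 (replicate L SX) S2" and r2: "qrun S2 (replicate L SY @ [SC2]) S'"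
    by (blast dest: qrun_split)
  from r2 obtain S3 where 3: "qrun S2 (replicate L SY) S3" and 4: "qrun S3 [SC2] S'"
    by (blast dest: qrun_split)
  show ?thesis using qrun_single[OF 1] qrun_rep[OF 2] qrun_rep[OF 3] qrun_single[OF 4] by blast
qed

lemma rep_prefix_eq:
  assumes "A @ B = replicate q d @ C" and "(\<exists>z\<in>set A. z \<noteq> d) \<or> (B \<noteq> [] \<and> hd B \<noteq> d)"
  shows "\<exists>A'. A = replicate q d @ A' \<and> C = A' @ B"
proof (cases "q \<le> length A")
  case True
  have "take q (A @ B) = replicate q d" using assms(1) by simp
  hence tA: "take q A = replicate q d" using True by simp
  have "drop q (A @ B) = C" using assms(1) by simp
  hence "drop q A @ B = C" using True by simp
  thus ?thesis using tA by (metis append_take_drop_id)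
next
  case False
  have "take (length A) (A @ B) = take (length A) (replicate q d @ C)" using assms(1) by simp
  hence "A = replicate (length A) d" using False by simp
  hence nA: "\<forall>z\<in>set A. z = d" by (metis in_set_replicate)
  have "B \<noteq> [] \<Longrightarrow> hd B = d"
  proof -
    assume "B \<noteq> []"
    have "(A @ B) ! length A = hd B" using \<open>B \<noteq> []\<close> by (simp add: nth_append hd_conv_nth)
    moreover have "(replicate q d @ C) ! length A = d" using False by (simp add: nth_append)
    ultimately show "hd B = d" using assms(1) by simp
  qed
  thus ?thesis using assms(2) nA by blast
qed

definition okp :: "sym \<Rightarrow> sym \<Rightarrow> bool" where
  "okp c d \<longleftrightarrow> (c = SC1 \<longrightarrow> d = SX) \<and> (c = SX \<longrightarrow> d = SX \<or> d = SY)"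

definition gs :: "sym list \<Rightarrow> bool" where
  "gs Q \<longleftrightarrow> successively okp Q \<and> (Q \<noteq> [] \<longrightarrow> last Q = SY \<or> last Q = SC2)"

fun rbc :: "nat \<Rightarrow> nat \<Rightarrow> sym \<Rightarrow> sym list \<Rightarrow> bool" where
  "rbc n k c [] = True"
| "rbc n k c (d # Q) = (if d = c then Suc k \<le> n \<and> rbc n (Suc k) c Q else rbc n 0 c Q)"

definition rb :: "nat \<Rightarrow> sym list \<Rightarrow> bool" where
  "rb n Q \<longleftrightarrow> rbc n 0 SX Q \<and> rbc n 0 SY Q"

definition strip :: "sym list \<Rightarrow> sym list" where
  "strip Q = (if Q \<noteq> [] \<and> hd Q = SC1 then tl Q else Q)"

definition fr :: "nat \<Rightarrow> sym list \<Rightarrow> bool" where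
  "fr L s \<longleftrightarrow> length (takeWhile (\<lambda>z. z = SX) s) < L \<and>
      length (takeWhile (\<lambda>z. z = SY) (dropWhile (\<lambda>z. z = SX) s)) < L"

definition Psi :: "nat \<Rightarrow> sym list \<Rightarrow> bool" where
  "Psi L Q \<longleftrightarrow> Q \<noteq> [] \<and> gs Q \<and> rb (L - 1) Q \<and> even (count_list Q SC2)"

definition Mid :: "nat \<Rightarrow> sym list \<Rightarrow> bool" where
  "Mid L Q \<longleftrightarrow> Q \<noteq> [] \<and> gs Q \<and> rb L Q \<and> odd (count_list Q SC2) \<and>
     (fr L (strip Q) \<or> (\<exists>j<L. Q = SC1 # replicate L SX @ replicate j SY @ [SC2]))"

lemma okp_simps[simp]:
  "okp c SX" "okp SY d" "okp SC2 d" "okp SX SY" "okp SA1 d" "okp SA2 d" "okp SB d" "okp SE0 d" "okp SE d"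
  "okp SC1 d \<longleftrightarrow> d = SX" "okp SX d \<longleftrightarrow> d = SX \<or> d = SY"
  by (auto simp: okp_def)

lemma succ_rep: "P c c \<Longrightarrow> successively P (replicate n c)"
proof (induction n)
  case (Suc n) thus ?case by (cases n) (auto simp: successively_Cons)
qed simp

lemma succ_drop: "successively P xs \<Longrightarrow> successively P (drop i xs)"
  by (metis append_take_drop_id successively_append_iff)

lemma rbc_rep_same: "rbc n k c (replicate m c @ Q) \<longleftrightarrow> (m = 0 \<or> k + m \<le> n) \<and> rbc n (k + m) c Q"
proof (induction m arbitrary: k)
  case 0 thus ?case by simp
next
  case (Suc m) thus ?case by auto
qed

lemma rbc_rep_other: "d \<noteq> c \<Longrightarrow> 0 < m \<Longrightarrow> rbc n k c (replicate m d @ Q) \<longleftrightarrow> rbc n 0 c Q"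
proof (induction m arbitrary: k)
  case 0 thus ?case by simp
next
  case (Suc m) thus ?case by (cases m) auto
qed

lemma rbc_sep: "d \<noteq> c \<Longrightarrow> rbc n k c (Q @ d # R) \<longleftrightarrow> rbc n k c Q \<and> rbc n 0 c R"
  by (induction Q arbitrary: k) auto

lemma rbc_sep_rep: "d \<noteq> c \<Longrightarrow> 0 < m \<Longrightarrow> rbc n k c (Q @ replicate m d @ R) \<longleftrightarrow> rbc n k c Q \<and> rbc n 0 c R"
proof -
  assume d: "d \<noteq> c" and m: "0 < m"
  then obtain m' where m': "m = Suc m'" by (cases m) auto
  have "rbc n k c (Q @ replicate m d @ R) \<longleftrightarrow> rbc n k c Q \<and> rbc n 0 c (replicate m' d @ R)"
    using d m' by (simp add: rbc_sep)
  moreover have "rbc n 0 c (replicate m' d @ R) \<longleftrightarrow> rbc n 0 c R"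
    using d rbc_rep_other[of d c m' n 0 R] by (cases "m' = 0") auto
  ultimately show ?thesis by simp
qed

lemma rbc_snoc_other: "d \<noteq> c \<Longrightarrow> rbc n k c (Q @ [d]) \<longleftrightarrow> rbc n k c Q"
  using rbc_sep[of d c n k Q "[]"] by simp

lemma rbc_append_lastother:
  "Q \<noteq> [] \<Longrightarrow> last Q \<noteq> c \<Longrightarrow> rbc n k c (Q @ R) \<longleftrightarrow> rbc n k c Q \<and> rbc n 0 c R"
proof (induction Q arbitrary: k)
  case Nil thus ?case by simp
next
  case (Cons d Q)
  show ?case
  proof (cases "Q = []")
    case True thus ?thesis using Cons.prems by auto
  next
    case False thus ?thesis using Cons by auto
  qed
qed

lemma rbc_mono: "rbc n k c Q \<Longrightarrow> j \<le> k \<Longrightarrow> rbc n j c Q"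
  by (induction Q arbitrary: k j) (auto split: if_splits)

lemma rbc_mono_n: "rbc n k c Q \<Longrightarrow> n \<le> n' \<Longrightarrow> rbc n' k c Q"
  by (induction Q arbitrary: k) (auto split: if_splits)

lemma rbc_drop: "rbc n k c Q \<Longrightarrow> rbc n 0 c (drop i Q)"
proof (induction Q arbitrary: i k)
  case Nil thus ?case by simp
next
  case (Cons d Q)
  show ?case
  proof (cases i)
    case 0 thus ?thesis using rbc_mono[OF Cons.prems, of 0] by simp
  next
    case (Suc i')
    have "rbc n (if d = c then Suc k else 0) c Q" using Cons.prems by (simp split: if_splits)
    thus ?thesis using Cons.IH Suc by simp
  qed
qed

lemma rbc_prefix: "rbc n k c (Q @ R) \<Longrightarrow> rbc n k c Q"
  by (induction Q arbitrary: k) (auto split: if_splits)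

lemma rbc_rep_bound: "rbc n 0 c (replicate m c @ Q) \<Longrightarrow> m \<le> n"
  using rbc_rep_same[of n 0 c m Q] by auto

lemma rbc_takeWhile: "rbc n 0 c Q \<Longrightarrow> length (takeWhile (\<lambda>z. z = c) Q) \<le> n"
proof -
  assume a: "rbc n 0 c Q"
  have "takeWhile (\<lambda>z. z = c) Q = replicate (length (takeWhile (\<lambda>z. z = c) Q)) c"
    by (metis (mono_tags, lifting) replicate_length_same set_takeWhileD)
  hence "Q = replicate (length (takeWhile (\<lambda>z. z = c) Q)) c @ dropWhile (\<lambda>z. z = c) Q"
    by (metis takeWhile_dropWhile_id)
  thus ?thesis using a rbc_rep_bound by metis
qed

lemma rb_drop: "rb n Q \<Longrightarrow> rb n (drop i Q)"
  by (auto simp: rb_def intro: rbc_drop)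

lemma rb_mono: "rb n Q \<Longrightarrow> n \<le> n' \<Longrightarrow> rb n' Q"
  by (auto simp: rb_def intro: rbc_mono_n)

lemma rb_snoc_C1: "rb n (Q @ [SC1]) \<longleftrightarrow> rb n Q"
  by (auto simp: rb_def rbc_snoc_other)

lemma gs_drop: "gs Q \<Longrightarrow> gs (drop i Q)"
  by (auto simp: gs_def succ_drop)

lemma shape_props:
  assumes s1: "successively okp S1" and r1: "rb L S1" and ne: "S1 \<noteq> []" and l1: "last S1 \<noteq> SX"
    and i: "0 < i" "i \<le> L" and j: "0 < j" "j \<le> L" and Bend: "Bend = [] \<or> Bend = [SC2]"
    and M: "M = drop k S1 @ replicate i SX @ replicate j SY @ Bend"
  shows "M \<noteq> [] \<and> gs M \<and> rb L M"
proof -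
  define R where "R = drop k S1"
  have sR: "successively okp R" using s1 succ_drop R_def by blast
  have rR: "rb L R" using r1 rb_drop R_def by blast
  have lR: "R \<noteq> [] \<Longrightarrow> last R \<noteq> SX" using l1 R_def by (metis drop_all last_drop not_le_imp_less)
  have M': "M = R @ replicate i SX @ replicate j SY @ Bend" using M R_def by simp
  have "M \<noteq> []" using M' i by simp
  moreover have "successively okp M"
  proof -
    have a0: "successively okp (replicate j SY @ Bend)"
      using Bend succ_rep[of okp SY j] by (auto simp: successively_append_iff)
    have a: "successively okp (replicate i SX @ replicate j SY @ Bend)"
      using i j a0 by (simp add: successively_append_iff succ_rep)
    show ?thesis using sR a i by (simp add: M' successively_append_iff)
  qed
  moreover have "last M = SY \<or> last M = SC2" using M' j Bend by auto
  moreover have "rb L M"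
  proof -
    have "rbc L 0 SX Bend" using Bend by auto
    hence "rbc L i SX (replicate j SY @ Bend)" using rbc_rep_other[of SY SX j L i Bend] j by simp
    hence x1: "rbc L 0 SX (replicate i SX @ replicate j SY @ Bend)"
      using i by (simp add: rbc_rep_same)
    have x2: "rbc L 0 SX R" using rR by (simp add: rb_def)
    have X: "rbc L 0 SX M"
    proof (cases "R = []")
      case True thus ?thesis using M' x1 by simp
    next
      case False thus ?thesis using M' x1 x2 lR by (simp add: rbc_append_lastother)
    qed
    have "rbc L j SY Bend" using Bend by auto
    hence y1: "rbc L 0 SY (replicate j SY @ Bend)" using j by (simp add: rbc_rep_same)
    have "rbc L 0 SY M" using M' rR y1 i by (simp add: rbc_sep_rep rb_def)
    thus ?thesis using X by (simp add: rb_def)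
  qed
  ultimately show ?thesis unfolding gs_def by blast
qed

lemma fr_lemma:
  assumes ne: "R0 \<noteq> []" and l: "last R0 \<noteq> SX" and r: "rb n R0" and nL: "n < L"
    and rest: "rest = [] \<or> hd rest = SX"
  shows "fr L (R0 @ rest)"
proof -
  have ex: "\<exists>z\<in>set R0. z \<noteq> SX" using ne l by (metis last_in_set)
  have t1: "takeWhile (\<lambda>z. z = SX) (R0 @ rest) = takeWhile (\<lambda>z. z = SX) R0"
    using ex by (auto simp: takeWhile_append)
  have b1: "length (takeWhile (\<lambda>z. z = SX) R0) \<le> n" using r by (simp add: rb_def rbc_takeWhile)
  have d1: "dropWhile (\<lambda>z. z = SX) (R0 @ rest) = dropWhile (\<lambda>z. z = SX) R0 @ rest"
    using ex by (auto simp: dropWhile_append)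
  define D where "D = dropWhile (\<lambda>z. z = SX) R0"
  have rD: "rb n D" using r D_def by (simp add: dropWhile_eq_drop rb_drop)
  have tw0: "takeWhile (\<lambda>z. z = SY) rest = []" using rest by (cases rest) auto
  have "length (takeWhile (\<lambda>z. z = SY) (D @ rest)) \<le> n"
  proof (cases "\<forall>z\<in>set D. z = SY")
    case True
    hence "takeWhile (\<lambda>z. z = SY) (D @ rest) = D" using tw0 by (simp add: takeWhile_append)
    moreover have "takeWhile (\<lambda>z. z = SY) D = D" using True by simp
    ultimately show ?thesis using rD rbc_takeWhile by (metis rb_def)
  next
    case False
    hence "takeWhile (\<lambda>z. z = SY) (D @ rest) = takeWhile (\<lambda>z. z = SY) D" by (auto simp: takeWhile_append)
    thus ?thesis using rD rbc_takeWhile by (metis rb_def)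
  qed
  thus ?thesis using t1 b1 d1 nL unfolding fr_def D_def by simp
qed


lemma rep_eq_hd: "Z @ W1 = replicate p c @ W \<Longrightarrow> Z \<noteq> [] \<Longrightarrow> hd Z \<noteq> c \<Longrightarrow> p = 0 \<and> W = Z @ W1"
  by (cases p; cases Z) auto

lemma rbc_rep_other_sep: "d \<noteq> c \<Longrightarrow> e \<noteq> c \<Longrightarrow> rbc n k c (replicate m d @ e # R) \<longleftrightarrow> rbc n 0 c R"
  by (induction m arbitrary: k) auto

lemma rbc_rep_other0: "d \<noteq> c \<Longrightarrow> rbc n 0 c (replicate m d @ R) = rbc n 0 c R"
  using rbc_rep_other[of d c m n 0 R] by (cases m) auto

lemma count_v: "count_list (v_blk L) SC2 = 1"
  by (simp add: v_blk_def)

lemma XY_shape: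
  assumes X: "S1 @ replicate (L-p) SX = replicate p SX @ S2"
    and Y: "S2 @ replicate (L-q) SY = replicate q SY @ S3"
    and nx: "\<exists>z\<in>set S1. z \<noteq> SX" and pL: "p < L"
  shows "S1 = replicate p SX @ replicate q SY @ drop (p+q) S1 \<and>
         S3 = drop (p+q) S1 @ replicate (L-p) SX @ replicate (L-q) SY"
proof -
  obtain R where R: "S1 = replicate p SX @ R" "S2 = R @ replicate (L-p) SX"
    using rep_prefix_eq[OF X] nx by blast
  have "R @ (replicate (L-p) SX @ replicate (L-q) SY) = replicate q SY @ S3" using Y R(2) by (metis append_assoc)
  moreover have "replicate (L-p) SX @ replicate (L-q) SY \<noteq> [] \<and> hd (replicate (L-p) SX @ replicate (L-q) SY) \<noteq> SY"
    using pL by (cases "L - p") auto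
  ultimately obtain R' where R': "R = replicate q SY @ R'" "S3 = R' @ replicate (L-p) SX @ replicate (L-q) SY"
    using rep_prefix_eq[of R "replicate (L-p) SX @ replicate (L-q) SY" q SY S3] by blast
  have "drop (p+q) S1 = R'" using R(1) R'(1) by simp
  thus ?thesis using R(1) R'(1) R'(2) by simp
qed

lemma B_shape:
  assumes S3: "S3 = D @ replicate i SX @ replicate j SY" and i: "0 < i"
    and B: "M = S3 @ [SC2] \<or> S3 = SC2 # M"
  shows "M = D @ replicate i SX @ replicate j SY @ [SC2] \<or>
         (D \<noteq> [] \<and> hd D = SC2 \<and> M = drop 1 D @ replicate i SX @ replicate j SY)"
proof (cases "D = []")
  case True thus ?thesis using S3 B i by (cases i) auto
next
  case False thus ?thesis using S3 B by (cases D) auto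
qed

lemma takeWhile_rep_bound: "replicate p c @ R = Z \<Longrightarrow> p \<le> length (takeWhile (\<lambda>z. z = c) Z)"
  by (induction p arbitrary: Z) auto

lemma dropWhile_rep_bound:
  "q \<le> length (takeWhile (\<lambda>z. z = SY) (dropWhile (\<lambda>z. z = SX) (replicate p SX @ replicate q SY @ D)))"
proof (cases q)
  case 0 thus ?thesis by simp
next
  case (Suc q')
  have "dropWhile (\<lambda>z. z = SX) (replicate p SX @ replicate q SY @ D) = replicate q SY @ D"
    using Suc by (simp add: dropWhile_append)
  thus ?thesis by (simp add: takeWhile_append)
qed

lemma Psi_pair:
  assumes "E \<noteq> []" "successively okp E" "last E = SC2" "rb L E"
    "successively okp E'" "E' \<noteq> []" "last E' = SC2" "rb L E'"
    "even (count_list E SC2 + count_list E' SC2)"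
  shows "Psi (Suc L) (E @ E')"
proof -
  obtain E0 where E0: "E = E0 @ [SC2]" using assms(1,3) by (metis append_butlast_last_id)
  have "rb L (E0 @ SC2 # E')" using assms(4,8) E0 by (simp add: rb_def rbc_sep rbc_snoc_other)
  thus ?thesis using assms E0 by (auto simp: Psi_def gs_def successively_append_iff successively_Cons)
qed

lemma succ_rep_app: "P c c \<Longrightarrow> (0 < n \<Longrightarrow> R \<noteq> [] \<Longrightarrow> P c (hd R)) \<Longrightarrow> successively P R \<Longrightarrow> successively P (replicate n c @ R)"
proof (induction n)
  case (Suc n) thus ?case by (cases n; cases R) (auto simp: successively_Cons)
qed simp

lemma unit_props:
  assumes "i \<le> L" "j \<le> L" "0 < i \<longrightarrow> 0 < j"
  shows "successively okp (replicate i SX @ replicate j SY @ [SC2]) \<and> rb L (replicate i SX @ replicate j SY @ [SC2])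
     \<and> count_list (replicate i SX @ replicate j SY @ [SC2]) SC2 = 1"
proof -
  have s1: "successively okp (replicate j SY @ [SC2])"
    by (rule succ_rep_app) auto
  have s2: "successively okp (replicate i SX @ replicate j SY @ [SC2])"
    using s1 assms(3) by (intro succ_rep_app) (auto simp: hd_append)
  have r: "rb L (replicate i SX @ replicate j SY @ [SC2])"
    using assms(1,2) by (auto simp: rb_def rbc_rep_same rbc_rep_other_sep rbc_rep_other0)
  show ?thesis using s2 r by simp
qed

lemma C0a:
  assumes "qrun [] (v_blk L) M" shows "M = v_blk L"
proof -
  obtain S1 S2 S3 p q where A: "S1 = [] @ [SC1] \<or> [] = SC1 # S1" and X: "S1 @ replicate (L-p) SX = replicate p SX @ S2"
    and Y: "S2 @ replicate (L-q) SY = replicate q SY @ S3" and B: "M = S3 @ [SC2] \<or> S3 = SC2 # M"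
    using copy_decomp[OF assms] by blast
  have S1: "S1 = [SC1]" using A by simp
  have S2: "S2 = SC1 # replicate L SX" using rep_eq_hd[of S1 "replicate (L-p) SX" p SX S2] X S1 by auto
  have S3: "S3 = SC1 # replicate L SX @ replicate L SY" using rep_eq_hd[of S2 "replicate (L-q) SY" q SY S3] Y S2 by auto
  show ?thesis using B S3 by (auto simp: v_blk_def)
qed


lemma last_rep3: "replicate p SX @ replicate q SY @ E \<noteq> [] \<Longrightarrow> E = [] \<or> E = [SC2] \<Longrightarrow>
   last (replicate p SX @ replicate q SY @ E) \<noteq> SC1"
  by (cases q; cases p) (auto simp: last_append)

lemma hd_rep_app: "0 < n \<Longrightarrow> hd (replicate n c @ R) = c"
  by (cases n) auto

lemma rep_app_ne: "0 < n \<Longrightarrow> replicate n c @ R \<noteq> []"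
  by (cases n) auto

lemma not_succ_xb: "successively okp (replicate p SX @ [SC2]) \<Longrightarrow> p = 0"
proof (induction p)
  case (Suc p) thus ?case by (cases p) (auto simp: successively_Cons)
qed simp

lemma fr_simple: "0 < a \<Longrightarrow> a < L \<Longrightarrow> 0 < b \<Longrightarrow> b < L \<Longrightarrow> Bend = [] \<or> Bend = [SC2] \<Longrightarrow>
   fr L (replicate a SX @ replicate b SY @ Bend)"
  by (auto simp: fr_def takeWhile_append dropWhile_append)

lemma C1:
  assumes P: "Psi L S" and L1: "1 \<le> L" and run: "qrun S (v_blk L) M"
  shows "Mid L M"
proof -
  have Sne: "S \<noteq> []" and sS: "successively okp S" and lS: "last S = SY \<or> last S = SC2"
    and rbS: "rb (L-1) S" and evS: "even (count_list S SC2)"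
    using P by (auto simp: Psi_def gs_def)
  obtain S1 S2 S3 p q where A: "S1 = S @ [SC1] \<or> S = SC1 # S1" and pL0: "p \<le> L"
    and X: "S1 @ replicate (L-p) SX = replicate p SX @ S2" and qL0: "q \<le> L"
    and Y: "S2 @ replicate (L-q) SY = replicate q SY @ S3" and B: "M = S3 @ [SC2] \<or> S3 = SC2 # M"
    using copy_decomp[OF run] by blast
  have S1ne: "S1 \<noteq> []" using A Sne lS by auto
  have sS1: "successively okp S1"
    using A sS Sne lS by (auto simp: successively_append_iff successively_Cons)
  have rS1: "rb (L-1) S1" using A rbS rb_snoc_C1 rb_drop[of "L-1" S 1] by auto
  have lS1: "last S1 \<noteq> SX" using A lS S1ne by auto
  have nx: "\<exists>z\<in>set S1. z \<noteq> SX" using lS1 S1ne last_in_set by metis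
  obtain R where R: "S1 = replicate p SX @ R" using rep_prefix_eq[OF X] nx by blast
  have pL: "p < L"
  proof -
    have "rbc (L-1) 0 SX (replicate p SX @ R)" using rS1 R by (simp add: rb_def)
    hence "p \<le> L - 1" by (rule rbc_rep_bound)
    thus ?thesis using L1 by simp
  qed
  define D where "D = drop (p+q) S1"
  have sh: "S1 = replicate p SX @ replicate q SY @ D" "S3 = D @ replicate (L-p) SX @ replicate (L-q) SY"
    using XY_shape[OF X Y nx pL] D_def by auto
  have Dk: "drop (p+q) S1 = D" and Dk1: "drop (Suc (p+q)) S1 = drop 1 D" unfolding D_def by simp_all
  have qL: "q < L"
  proof -
    have "rb (L-1) (drop p S1)" using rS1 rb_drop by blast
    hence "rbc (L-1) 0 SY (replicate q SY @ D)" using sh(1) by (simp add: rb_def)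
    hence "q \<le> L-1" by (rule rbc_rep_bound)
    thus ?thesis using L1 by simp
  qed
  have par: "odd (count_list M SC2)" using qrun_count[OF run, of SC2] evS count_v by simp
  have BB: "M = D @ replicate (L-p) SX @ replicate (L-q) SY @ [SC2] \<or>
         (D \<noteq> [] \<and> hd D = SC2 \<and> M = drop 1 D @ replicate (L-p) SX @ replicate (L-q) SY)"
    using B_shape[OF sh(2) _ B] pL by simp
  obtain k Bend where K: "M = drop k S1 @ replicate (L-p) SX @ replicate (L-q) SY @ Bend"
    and Bend: "Bend = [] \<or> Bend = [SC2]"
    and Kc: "(k = p + q \<and> Bend = [SC2]) \<or> (k = Suc (p + q) \<and> Bend = [] \<and> D \<noteq> [] \<and> hd D = SC2)"
  proof -
    from BB show ?thesis
    proof
      assume "M = D @ replicate (L-p) SX @ replicate (L-q) SY @ [SC2]"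
      thus ?thesis using that[of "p+q" "[SC2]"] D_def by simp
    next
      assume a: "D \<noteq> [] \<and> hd D = SC2 \<and> M = drop 1 D @ replicate (L-p) SX @ replicate (L-q) SY"
      have "drop 1 D = drop (Suc (p+q)) S1" using D_def by simp
      thus ?thesis using that[of "Suc (p+q)" "[]"] a by simp
    qed
  qed
  have rL: "rb L S1" using rS1 rb_mono by fastforce
  have props: "M \<noteq> [] \<and> gs M \<and> rb L M"
    using shape_props[OF sS1 rL S1ne lS1 _ _ _ _ Bend K] pL qL by simp
  define rest where "rest = replicate (L-p) SX @ replicate (L-q) SY @ Bend"
  have rest: "rest = [] \<or> hd rest = SX" unfolding rest_def using pL hd_rep_app[of "L-p" SX] by simp
  have KM: "M = drop k S1 @ rest" unfolding rest_def by (rule K)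
  have front: "fr L (strip M) \<or> (\<exists>j<L. M = SC1 # replicate L SX @ replicate j SY @ [SC2])"
  proof (cases "drop k S1 = []")
    case True
    have E: "S1 = replicate p SX @ replicate q SY @ D \<and> (D = [] \<or> D = [SC2])"
    proof -
      from Kc show ?thesis
      proof
        assume "k = p + q \<and> Bend = [SC2]"
        hence "D = []" using True Dk by simp
        thus ?thesis using sh(1) by simp
      next
        assume a: "k = Suc (p + q) \<and> Bend = [] \<and> D \<noteq> [] \<and> hd D = SC2"
        hence "drop 1 D = []" using True Dk1 by simp
        hence "D = [SC2]" using a by (cases D) auto
        thus ?thesis using sh(1) by simp
      qed
    qed
    have A2: "S = SC1 # S1"
    proof -
      have "last S1 \<noteq> SC1" using last_rep3[of p q D] E S1ne by simp
      thus ?thesis using A by auto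
    qed
    have hS1: "hd S1 = SX" using sS A2 S1ne by (auto simp: successively_Cons)
    have p1: "0 < p"
    proof (rule ccontr)
      assume "\<not> 0 < p"
      hence "S1 = replicate q SY @ D" using E by simp
      thus False using hS1 S1ne E by (cases q) auto
    qed
    have q1: "0 < q"
    proof (rule ccontr)
      assume "\<not> 0 < q"
      hence S1e: "S1 = replicate p SX @ D" using E by simp
      have "D \<noteq> []"
      proof
        assume "D = []"
        hence "S1 = replicate p SX" using S1e by simp
        hence "last S1 = SX" using p1 by simp
        thus False using lS1 by simp
      qed
      hence "D = [SC2]" using E by simp
      hence "S1 = replicate p SX @ [SC2]" using S1e by simp
      thus False using sS1 p1 not_succ_xb[of p] by simp
    qed
    have "M = rest" using KM True by simp
    moreover have "strip rest = rest" unfolding rest_def using pL by (simp add: strip_def hd_rep_app rep_app_ne)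
    moreover have "fr L rest" unfolding rest_def using fr_simple p1 q1 pL qL Bend by simp
    ultimately show ?thesis by simp
  next
    case False
    have lR2: "last (drop k S1) = last S1" using False by simp
    have rR2: "rb (L-1) (drop k S1)" using rS1 rb_drop by blast
    have L1': "L - 1 < L" using L1 by simp
    show ?thesis
    proof (cases "hd (drop k S1) = SC1")
      case False2: False
      have "strip M = M" using KM False False2 by (simp add: strip_def)
      moreover have "fr L (drop k S1 @ rest)" using fr_lemma[OF False _ rR2 L1' rest] lR2 lS1 by simp
      ultimately show ?thesis using KM by simp
    next
      case True2: True
      have st: "strip M = tl (drop k S1) @ rest" using KM False True2 by (simp add: strip_def)
      show ?thesis
      proof (cases "tl (drop k S1) = []")
        case False3: False
        have tl: "tl (drop k S1) = drop (Suc k) S1" by (simp add: drop_Suc tl_drop)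
        have "last (tl (drop k S1)) = last S1" using False3 lR2 by (metis last_tl)
        moreover have "rb (L-1) (tl (drop k S1))" using tl rS1 rb_drop by simp
        ultimately have "fr L (tl (drop k S1) @ rest)" using fr_lemma[OF False3 _ _ L1' rest] lS1 by simp
        thus ?thesis using st by simp
      next
        case True3: True
        have dk: "drop k S1 = [SC1]" using True2 True3 False by (cases "drop k S1") auto
        hence "last S1 = SC1" using lR2 by simp
        hence A1: "S1 = S @ [SC1]" using A lS S1ne by auto
        from Kc show ?thesis
        proof
          assume kc: "k = p + q \<and> Bend = [SC2]"
          hence "D = [SC1]" using dk Dk by simp
          hence "S @ [SC1] = (replicate p SX @ replicate q SY) @ [SC1]" using A1 sh(1) by simp
          hence Se: "S = replicate p SX @ replicate q SY" by simp
          have q1: "0 < q"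
          proof (rule ccontr)
            assume "\<not> 0 < q"
            hence "S = replicate p SX" using Se by simp
            moreover have "p \<noteq> 0" using Sne \<open>S = replicate p SX\<close> by auto
            ultimately have "last S = SX" by simp
            thus False using lS by simp
          qed
          have Me: "M = SC1 # replicate (L-p) SX @ replicate (L-q) SY @ [SC2]" using KM dk rest_def kc by simp
          show ?thesis
          proof (cases "p = 0")
            case True
            thus ?thesis using Me qL q1 by (intro disjI2 exI[of _ "L - q"]) simp
          next
            case False
            have "strip M = replicate (L-p) SX @ replicate (L-q) SY @ [SC2]" using Me by (simp add: strip_def)
            moreover have "fr L (replicate (L-p) SX @ replicate (L-q) SY @ [SC2])"
              using fr_simple False q1 pL qL by simp
            ultimately show ?thesis by simp
          qed
        next
          assume kc: "k = Suc (p + q) \<and> Bend = [] \<and> D \<noteq> [] \<and> hd D = SC2"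
          hence "drop 1 D = [SC1]" using dk Dk1 by simp
          hence "D = [SC2, SC1]" using kc by (cases D) auto
          hence "S @ [SC1] = (replicate p SX @ replicate q SY @ [SC2]) @ [SC1]" using A1 sh(1) by simp
          hence "S = replicate p SX @ replicate q SY @ [SC2]" by simp
          hence "count_list S SC2 = 1" by simp
          thus ?thesis using evS by simp
        qed
      qed
    qed
  qed
  show ?thesis using props par front by (simp add: Mid_def)
qed


lemma v_props: "1 \<le> L \<Longrightarrow> successively okp (v_blk L) \<and> rb L (v_blk L) \<and> last (v_blk L) = SC2 \<and> v_blk L \<noteq> []"
proof -
  assume L: "1 \<le> L"
  have u: "successively okp (replicate L SX @ replicate L SY @ [SC2]) \<and> rb L (replicate L SX @ replicate L SY @ [SC2])"
    using unit_props[of L L L] L by simp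
  have "successively okp (SC1 # replicate L SX @ replicate L SY @ [SC2])"
    using u L by (simp add: successively_Cons hd_rep_app rep_app_ne)
  moreover have "rb L (SC1 # replicate L SX @ replicate L SY @ [SC2])" using u by (simp add: rb_def)
  ultimately show ?thesis by (simp add: v_blk_def)
qed

lemma Psi_rep_y: "0 < m \<Longrightarrow> m \<le> L \<Longrightarrow> Psi (Suc L) (replicate m SY)"
proof -
  assume m: "0 < m" "m \<le> L"
  have "rb L (replicate m SY)" using rbc_rep_same[of L 0 SY m "[]"] rbc_rep_other0[of SY SX L m "[]"] m
    by (simp add: rb_def)
  moreover have "successively okp (replicate m SY)" by (rule succ_rep) simp
  ultimately show ?thesis using m by (simp add: Psi_def gs_def)
qed

lemma Exc:
  assumes Se: "S = SC1 # replicate L SX @ replicate j SY @ [SC2]" and j1: "1 \<le> j" and jL: "j \<le> L"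
    and run: "qrun S (v_blk L) S'"
  shows "Psi (Suc L) S' \<or> (S' = [] \<and> j = L)"
proof -
  have L1: "1 \<le> L" using j1 jL by simp
  obtain S1 S2 S3 p q where A: "S1 = S @ [SC1] \<or> S = SC1 # S1" and pL0: "p \<le> L"
    and X: "S1 @ replicate (L-p) SX = replicate p SX @ S2" and qL0: "q \<le> L"
    and Y: "S2 @ replicate (L-q) SY = replicate q SY @ S3" and B: "S' = S3 @ [SC2] \<or> S3 = SC2 # S'"
    using copy_decomp[OF run] by blast
  have uS: "successively okp (replicate L SX @ replicate j SY @ [SC2]) \<and> rb L (replicate L SX @ replicate j SY @ [SC2])"
    using unit_props[of L L j] jL j1 by simp
  have sS: "successively okp S" using uS L1 Se by (simp add: successively_Cons hd_rep_app rep_app_ne)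
  have rS: "rb L S" using uS Se by (simp add: rb_def)
  from A show ?thesis
  proof
    assume A1: "S1 = S @ [SC1]"
    have "p = 0 \<and> S2 = S1 @ replicate (L-p) SX" using rep_eq_hd[OF X] A1 Se by simp
    hence S2: "S2 = S @ SC1 # replicate L SX" using A1 by simp
    have "q = 0 \<and> S3 = S2 @ replicate (L-q) SY" using rep_eq_hd[OF Y] S2 Se by simp
    hence S3: "S3 = S @ SC1 # replicate L SX @ replicate L SY" using S2 by simp
    have "S' = S @ v_blk L" using B S3 Se by (auto simp: v_blk_def)
    moreover have "Psi (Suc L) (S @ v_blk L)"
      using Psi_pair[of S L "v_blk L"] v_props[OF L1] sS rS Se count_v by simp
    ultimately show ?thesis by simp
  next
    assume A2: "S = SC1 # S1"
    hence S1: "S1 = replicate L SX @ replicate j SY @ [SC2]" using Se by simp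
    obtain R where R: "S1 = replicate p SX @ R" "S2 = R @ replicate (L-p) SX"
      using rep_prefix_eq[OF X] S1 by auto
    have Re: "R = replicate (L-p) SX @ replicate j SY @ [SC2]"
    proof -
      have "R = drop p S1" using R(1) by simp
      thus ?thesis using S1 pL0 by simp
    qed
    show ?thesis
    proof (cases "p < L")
      case True
      have S2: "S2 = replicate (L-p) SX @ replicate j SY @ [SC2] @ replicate (L-p) SX" using R Re by simp
      have "q = 0 \<and> S3 = S2 @ replicate (L-q) SY" using rep_eq_hd[OF Y] S2 True by (simp add: hd_rep_app rep_app_ne)
      hence S3: "S3 = (replicate (L-p) SX @ replicate j SY @ [SC2]) @ replicate (L-p) SX @ replicate L SY" using S2 by simp
      have "hd S3 = SX" using S3 True by (simp add: hd_rep_app)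
      hence "S' = (replicate (L-p) SX @ replicate j SY @ [SC2]) @ (replicate (L-p) SX @ replicate L SY @ [SC2])"
        using B S3 by auto
      moreover have "Psi (Suc L) ((replicate (L-p) SX @ replicate j SY @ [SC2]) @ (replicate (L-p) SX @ replicate L SY @ [SC2]))"
        using unit_props[of "L-p" L j] unit_props[of "L-p" L L] jL j1 L1 by (intro Psi_pair) simp_all
      ultimately show ?thesis by simp
    next
      case False
      hence pe: "p = L" using pL0 by simp
      have S2: "S2 = replicate j SY @ [SC2]" using R Re pe by simp
      obtain R2 where R2: "S2 = replicate q SY @ R2" "S3 = R2 @ replicate (L-q) SY"
        using rep_prefix_eq[OF Y] S2 by auto
      have qj: "q \<le> j"
      proof (rule ccontr)
        assume "\<not> q \<le> j"
        hence "S2 ! j = SY" using R2(1) by (simp add: nth_append)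
        moreover have "S2 ! j = SC2" using S2 by (simp add: nth_append)
        ultimately show False by simp
      qed
      have R2e: "R2 = replicate (j-q) SY @ [SC2]"
      proof -
        have "R2 = drop q S2" using R2(1) by simp
        thus ?thesis using S2 qj by simp
      qed
      from B show ?thesis
      proof
        assume "S' = S3 @ [SC2]"
        hence "S' = (replicate 0 SX @ replicate (j-q) SY @ [SC2]) @ (replicate 0 SX @ replicate (L-q) SY @ [SC2])"
          using R2 R2e by simp
        moreover have "Psi (Suc L) ((replicate 0 SX @ replicate (j-q) SY @ [SC2]) @ (replicate 0 SX @ replicate (L-q) SY @ [SC2]))"
          using unit_props[of 0 L "j-q"] unit_props[of 0 L "L-q"] jL by (intro Psi_pair) simp_all
        ultimately show ?thesis by simp
      next
        assume b2: "S3 = SC2 # S'"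
        have "j - q = 0"
        proof (rule ccontr)
          assume "j - q \<noteq> 0"
          hence "hd S3 = SY" using R2 R2e by (simp add: hd_rep_app)
          thus False using b2 by simp
        qed
        hence Sq: "S' = replicate (L-q) SY" using b2 R2 R2e by simp
        show ?thesis
        proof (cases "j = L")
          case True
          thus ?thesis using Sq qj \<open>j - q = 0\<close> by simp
        next
          case False
          thus ?thesis using Sq Psi_rep_y[of "L-q" L] qj jL \<open>j - q = 0\<close> by simp
        qed
      qed
    qed
  qed
qed

lemma C0b:
  assumes L1: "1 \<le> L" and run: "qrun (v_blk L) (v_blk L) S'"
  shows "S' = [] \<or> Psi (Suc L) S'"
  using Exc[of "v_blk L" L L S'] L1 run by (auto simp: v_blk_def)


lemma C2:
  assumes Mi: "Mid L S" and L1: "1 \<le> L" and run: "qrun S (v_blk L) S'"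
  shows "Psi (Suc L) S'"
proof -
  have Sne: "S \<noteq> []" and sS: "successively okp S" and lS: "last S = SY \<or> last S = SC2"
    and rbS: "rb L S" and odS: "odd (count_list S SC2)"
    and F: "fr L (strip S) \<or> (\<exists>j<L. S = SC1 # replicate L SX @ replicate j SY @ [SC2])"
    using Mi by (auto simp: Mid_def gs_def)
  from F show ?thesis
  proof
    assume "\<exists>j<L. S = SC1 # replicate L SX @ replicate j SY @ [SC2]"
    then obtain j where jL: "j < L" and Se: "S = SC1 # replicate L SX @ replicate j SY @ [SC2]" by blast
    have j1: "1 \<le> j"
    proof (rule ccontr)
      assume "\<not> 1 \<le> j"
      hence "S = SC1 # (replicate L SX @ [SC2])" using Se by simp
      hence "successively okp (replicate L SX @ [SC2])" using sS by (simp add: successively_Cons)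
      hence "L = 0" by (rule not_succ_xb)
      thus False using L1 by simp
    qed
    show ?thesis using Exc[OF Se j1 _ run] jL by simp
  next
    assume fS: "fr L (strip S)"
    obtain S1 S2 S3 p q where A: "S1 = S @ [SC1] \<or> S = SC1 # S1" and pL0: "p \<le> L"
      and X: "S1 @ replicate (L-p) SX = replicate p SX @ S2" and qL0: "q \<le> L"
      and Y: "S2 @ replicate (L-q) SY = replicate q SY @ S3" and B: "S' = S3 @ [SC2] \<or> S3 = SC2 # S'"
      using copy_decomp[OF run] by blast
    have S1ne: "S1 \<noteq> []" using A Sne lS by auto
    have sS1: "successively okp S1"
      using A sS Sne lS by (auto simp: successively_append_iff successively_Cons)
    have rS1: "rb L S1" using A rbS rb_snoc_C1 rb_drop[of L S 1] by auto
    have lS1: "last S1 \<noteq> SX" using A lS S1ne by auto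
    have nx: "\<exists>z\<in>set S1. z \<noteq> SX" using lS1 S1ne last_in_set by metis
    have exS: "\<exists>z\<in>set S. z \<noteq> SX" using lS Sne last_in_set by (metis sym.distinct)
    obtain R where R: "S1 = replicate p SX @ R" using rep_prefix_eq[OF X] nx by blast
    have pT: "p \<le> length (takeWhile (\<lambda>z. z = SX) S1)" using takeWhile_rep_bound R by metis
    have pL: "p < L"
    proof -
      from A have "length (takeWhile (\<lambda>z. z = SX) S1) < L"
      proof
        assume A1: "S1 = S @ [SC1]"
        show ?thesis
        proof (cases "hd S = SC1")
          case True
          hence "takeWhile (\<lambda>z. z = SX) S1 = []" using A1 Sne by (cases S) auto
          thus ?thesis using L1 by simp
        next
          case False
          hence "strip S = S" by (simp add: strip_def)
          moreover have "takeWhile (\<lambda>z. z = SX) S1 = takeWhile (\<lambda>z. z = SX) S"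
            using A1 exS by (auto simp: takeWhile_append)
          ultimately show ?thesis using fS by (simp add: fr_def)
        qed
      next
        assume A2: "S = SC1 # S1"
        hence "strip S = S1" by (simp add: strip_def)
        thus ?thesis using fS by (simp add: fr_def)
      qed
      thus ?thesis using pT by simp
    qed
    define D where "D = drop (p+q) S1"
    have sh: "S1 = replicate p SX @ replicate q SY @ D" "S3 = D @ replicate (L-p) SX @ replicate (L-q) SY"
      using XY_shape[OF X Y nx pL] D_def by auto
    have Dk1: "drop (Suc (p+q)) S1 = drop 1 D" unfolding D_def by simp
    have qT: "q \<le> length (takeWhile (\<lambda>z. z = SY) (dropWhile (\<lambda>z. z = SX) S1))"
      using dropWhile_rep_bound[of q p D] sh(1) by simp
    have qL: "q < L"
    proof (cases "q = 0")
      case True thus ?thesis using L1 by simp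
    next
      case False
      from A have "length (takeWhile (\<lambda>z. z = SY) (dropWhile (\<lambda>z. z = SX) S1)) < L"
      proof
        assume A1: "S1 = S @ [SC1]"
        show ?thesis
        proof (cases "hd S = SC1")
          case True
          hence "takeWhile (\<lambda>z. z = SX) S1 = []" using A1 Sne by (cases S) auto
          hence "p = 0" using pT by simp
          hence "hd S1 = SY" using sh(1) False by (simp add: hd_rep_app)
          moreover have "hd S1 = SC1" using A1 True Sne by simp
          ultimately show ?thesis by simp
        next
          case hS: False
          hence "strip S = S" by (simp add: strip_def)
          moreover have "dropWhile (\<lambda>z. z = SX) S1 = dropWhile (\<lambda>z. z = SX) S @ [SC1]"
            using A1 exS by (auto simp: dropWhile_append)
          moreover have "takeWhile (\<lambda>z. z = SY) (dropWhile (\<lambda>z. z = SX) S @ [SC1]) =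
                         takeWhile (\<lambda>z. z = SY) (dropWhile (\<lambda>z. z = SX) S)"
            by (simp add: takeWhile_tail)
          ultimately show ?thesis using fS by (simp add: fr_def)
        qed
      next
        assume A2: "S = SC1 # S1"
        hence "strip S = S1" by (simp add: strip_def)
        thus ?thesis using fS by (simp add: fr_def)
      qed
      thus ?thesis using qT by simp
    qed
    have par: "even (count_list S' SC2)" using qrun_count[OF run, of SC2] odS count_v by simp
    have BB: "S' = D @ replicate (L-p) SX @ replicate (L-q) SY @ [SC2] \<or>
           (D \<noteq> [] \<and> hd D = SC2 \<and> S' = drop 1 D @ replicate (L-p) SX @ replicate (L-q) SY)"
      using B_shape[OF sh(2) _ B] pL by simp
    obtain k Bend where K: "S' = drop k S1 @ replicate (L-p) SX @ replicate (L-q) SY @ Bend"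
      and Bend: "Bend = [] \<or> Bend = [SC2]"
    proof -
      from BB show ?thesis
      proof
        assume "S' = D @ replicate (L-p) SX @ replicate (L-q) SY @ [SC2]"
        thus ?thesis using that[of "p+q" "[SC2]"] D_def by simp
      next
        assume a: "D \<noteq> [] \<and> hd D = SC2 \<and> S' = drop 1 D @ replicate (L-p) SX @ replicate (L-q) SY"
        thus ?thesis using that[of "Suc (p+q)" "[]"] Dk1 by simp
      qed
    qed
    have props: "S' \<noteq> [] \<and> gs S' \<and> rb L S'"
      using shape_props[OF sS1 rS1 S1ne lS1 _ _ _ _ Bend K] pL qL by simp
    show ?thesis using props par by (simp add: Psi_def)
  qed
qed

definition Good :: "nat \<Rightarrow> sym list \<Rightarrow> bool" where
  "Good L Q \<longleftrightarrow> Q = [] \<or> Psi L Q"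

lemma block_lemma:
  assumes G: "Good L Q" and L1: "1 \<le> L" and run: "qrun Q (v_blk L @ v_blk L) Q'"
  shows "Good (Suc L) Q' \<and> (Q \<noteq> [] \<longrightarrow> Q' \<noteq> [])"
proof -
  obtain M where r1: "qrun Q (v_blk L) M" and r2: "qrun M (v_blk L) Q'" using qrun_split[OF run] by blast
  show ?thesis
  proof (cases "Q = []")
    case True
    hence "M = v_blk L" using C0a r1 by simp
    hence "Q' = [] \<or> Psi (Suc L) Q'" using C0b[OF L1] r2 by simp
    thus ?thesis using True by (simp add: Good_def)
  next
    case False
    hence "Psi L Q" using G by (simp add: Good_def)
    hence "Mid L M" using C1 L1 r1 by blast
    hence "Psi (Suc L) Q'" using C2 L1 r2 by blast
    thus ?thesis by (simp add: Good_def Psi_def)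
  qed
qed


definition cxy :: "sym \<Rightarrow> bool" where "cxy c \<longleftrightarrow> c = SC1 \<or> c = SC2 \<or> c = SX \<or> c = SY"

locale comp =
  fixes w :: "sym list" and cs :: "(nat list \<times> nat) list"
  assumes acc: "accepting_comp w cs"
begin

lemma cs_ne: "cs \<noteq> []" and cs_hd: "hd cs = ([], 0)" and cs_last: "last cs = ([], length w)"
  and cs_step: "\<And>k. Suc k < length cs \<Longrightarrow> qstep w (cs ! k) (cs ! Suc k)"
  using acc by (auto simp: accepting_comp_def)

lemma qstep_snd: "qstep w a b \<Longrightarrow> snd b = Suc (snd a)"
  by (induction rule: qstep.induct) auto

lemma snd_cs: "k < length cs \<Longrightarrow> snd (cs ! k) = k"
proof (induction k)
  case 0 thus ?case using cs_hd cs_ne by (simp add: hd_conv_nth[symmetric])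
next
  case (Suc k) thus ?case using cs_step[of k] qstep_snd by simp
qed

lemma len_cs: "length cs = Suc (length w)"
proof -
  have "snd (last cs) = length cs - 1" using snd_cs cs_ne by (simp add: last_conv_nth)
  thus ?thesis using cs_last cs_ne by (cases cs) auto
qed

lemma cs0: "fst (cs ! 0) = []" using cs_hd cs_ne by (simp add: hd_conv_nth[symmetric])

lemma csN: "fst (cs ! length w) = []"
  using cs_last cs_ne len_cs by (simp add: last_conv_nth)

lemma step_cases:
  assumes k: "k < length w"
  shows "fst (cs ! Suc k) = fst (cs ! k) @ [k] \<or> (\<exists>q. fst (cs ! k) = q # fst (cs ! Suc k) \<and> w ! q = w ! k)"
proof -
  have st: "qstep w (cs ! k) (cs ! Suc k)" using cs_step k len_cs by simp
  have e: "cs ! k = (fst (cs ! k), k)" using snd_cs[of k] k len_cs by (metis less_SucI prod.collapse)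
  from st show ?thesis
  proof (cases rule: qstep.cases)
    case (push i Q) thus ?thesis using e by auto
  next
    case (pop i q Q) thus ?thesis using e by auto
  qed
qed

definition rq :: "nat \<Rightarrow> nat list" where "rq k = filter (\<lambda>p. cxy (w ! p)) (fst (cs ! k))"
definition sq :: "nat \<Rightarrow> sym list" where "sq k = map (\<lambda>p. w ! p) (rq k)"

lemma rq0: "rq 0 = []" by (simp add: rq_def cs0)
lemma rqN: "rq (length w) = []" by (simp add: rq_def csN)

lemma rq_step:
  assumes k: "k < length w"
  shows "rq (Suc k) = rq k @ (if cxy (w ! k) then [k] else []) \<or>
    (\<exists>q. fst (cs ! k) = q # fst (cs ! Suc k) \<and> w ! q = w ! k \<and>
       rq k = (if cxy (w ! k) then q # rq (Suc k) else rq (Suc k)))"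
  using step_cases[OF k] by (auto simp: rq_def)

lemma sq_step: "k < length w \<Longrightarrow> qrun (sq k) (filter cxy [w ! k]) (sq (Suc k))"
  using rq_step[of k] by (auto simp: sq_def intro: qrun.intros qrun_single_intro)

lemma sq_run: "i \<le> j \<Longrightarrow> j \<le> length w \<Longrightarrow> qrun (sq i) (filter cxy (take (j - i) (drop i w))) (sq j)"
proof (induction j)
  case 0 thus ?case by (simp add: qrun.intros)
next
  case (Suc j)
  show ?case
  proof (cases "i = Suc j")
    case True thus ?thesis by (simp add: qrun.intros)
  next
    case False
    hence ij: "i \<le> j" using Suc.prems by simp
    have "take (Suc j - i) (drop i w) = take (j - i) (drop i w) @ [w ! j]"
    proof -
      have "Suc j - i = Suc (j - i)" using ij by simp
      moreover have "j - i < length (drop i w)" using Suc.prems ij by simp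
      ultimately show ?thesis using ij by (simp add: take_Suc_conv_app_nth)
    qed
    thus ?thesis using qrun_append[OF Suc.IH[OF ij] sq_step[of j]] Suc.prems ij by simp
  qed
qed

lemma len_step: "k < length w \<Longrightarrow> length (rq (Suc k)) \<le> Suc (length (rq k)) \<and> length (rq k) \<le> Suc (length (rq (Suc k)))"
  using rq_step[of k] by (auto split: if_splits)

lemma push_step: "k < length w \<Longrightarrow> length (rq (Suc k)) = Suc (length (rq k)) \<Longrightarrow> rq (Suc k) = rq k @ [k]"
  using rq_step[of k] by (auto split: if_splits)

lemma pop_step: "k < length w \<Longrightarrow> length (rq k) = Suc (length (rq (Suc k))) \<Longrightarrow>
   \<exists>q. fst (cs ! k) = q # fst (cs ! Suc k) \<and> rq k = q # rq (Suc k)"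
  using rq_step[of k] by (auto split: if_splits)

lemma const_step: "k < length w \<Longrightarrow> \<not> cxy (w ! k) \<Longrightarrow> rq (Suc k) = rq k"
  using rq_step[of k] by (auto split: if_splits)

lemma len_bounds: "t \<le> s \<Longrightarrow> i + s \<le> length w \<Longrightarrow>
   length (rq (i + s)) \<le> length (rq (i + t)) + (s - t) \<and> length (rq (i + t)) \<le> length (rq (i + s)) + (s - t)"
proof (induction s)
  case 0 thus ?case by simp
next
  case (Suc s)
  show ?case
  proof (cases "t = Suc s")
    case True thus ?thesis by simp
  next
    case False
    hence ts: "t \<le> s" using Suc.prems by simp
    have IH: "length (rq (i + s)) \<le> length (rq (i + t)) + (s - t) \<and> length (rq (i + t)) \<le> length (rq (i + s)) + (s - t)"
      using Suc.IH ts Suc.prems by simp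
    have "length (rq (Suc (i + s))) \<le> Suc (length (rq (i + s))) \<and> length (rq (i + s)) \<le> Suc (length (rq (Suc (i + s))))"
      using len_step[of "i + s"] Suc.prems by simp
    thus ?thesis using IH ts by auto
  qed
qed

lemma const_interval: "(\<forall>t<n. \<not> cxy (w ! (i + t))) \<Longrightarrow> i + n \<le> length w \<Longrightarrow> rq (i + n) = rq i"
  by (induction n) (auto simp: const_step)

lemma push_interval:
  assumes r0: "rq i = []" and len: "i + n \<le> length w" and ln: "length (rq (i + n)) = n"
  shows "rq (i + n) = [i..<i + n]"
proof -
  have L: "\<forall>t\<le>n. length (rq (i + t)) = t"
  proof (intro allI impI)
    fix t assume t: "t \<le> n"
    have "length (rq (i + t)) \<le> length (rq (i + 0)) + (t - 0)" using len_bounds[of 0 t i] t len by simp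
    moreover have "length (rq (i + n)) \<le> length (rq (i + t)) + (n - t)" using len_bounds[of t n i] t len by simp
    ultimately show "length (rq (i + t)) = t" using r0 ln t by simp
  qed
  have "\<forall>t\<le>n. rq (i + t) = [i..<i + t]"
  proof (intro allI impI)
    fix t assume "t \<le> n"
    thus "rq (i + t) = [i..<i + t]"
    proof (induction t)
      case 0 thus ?case using r0 by simp
    next
      case (Suc t)
      have l1: "length (rq (i + Suc t)) = Suc t" using L[rule_format, of "Suc t"] Suc.prems by simp
      have l0: "length (rq (i + t)) = t" using L Suc.prems by auto
      have "rq (Suc (i + t)) = rq (i + t) @ [i + t]"
        using push_step[of "i + t"] l1 l0 Suc.prems len by simp
      thus ?case using Suc by simp
    qed
  qed
  thus ?thesis by simp
qed

lemma pop_interval: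
  assumes r0: "rq i = [i0..<i0 + n]" and len: "i + n \<le> length w" and ln: "rq (i + n) = []"
  shows "\<forall>t<n. fst (cs ! (i + t)) = (i0 + t) # fst (cs ! Suc (i + t))"
proof -
  have L: "\<forall>t\<le>n. length (rq (i + t)) = n - t"
  proof (intro allI impI)
    fix t assume t: "t \<le> n"
    have "length (rq (i + 0)) \<le> length (rq (i + t)) + (t - 0)" using len_bounds[of 0 t i] t len by simp
    moreover have "length (rq (i + t)) \<le> length (rq (i + n)) + (n - t)" using len_bounds[of t n i] t len by simp
    ultimately show "length (rq (i + t)) = n - t" using r0 ln t by simp
  qed
  have R: "\<forall>t\<le>n. rq (i + t) = [i0 + t..<i0 + n]"
  proof (intro allI impI)
    fix t assume "t \<le> n"
    thus "rq (i + t) = [i0 + t..<i0 + n]"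
    proof (induction t)
      case 0 thus ?case using r0 by simp
    next
      case (Suc t)
      have l1: "length (rq (i + Suc t)) = n - Suc t" using L[rule_format, of "Suc t"] Suc.prems by simp
      have l0: "length (rq (i + t)) = n - t" using L Suc.prems by auto
      obtain q where "rq (i + t) = q # rq (Suc (i + t))"
        using pop_step[of "i + t"] l1 l0 Suc.prems len by fastforce
      moreover have "[i0 + t..<i0 + n] = (i0 + t) # [i0 + Suc t..<i0 + n]" using Suc.prems by (simp add: upt_conv_Cons)
      ultimately show ?case using Suc by auto
    qed
  qed
  show ?thesis
  proof (intro allI impI)
    fix t assume t: "t < n"
    have l1: "length (rq (i + Suc t)) = n - Suc t" using L[rule_format, of "Suc t"] t by simp
    have l0: "length (rq (i + t)) = n - t" using L t by auto
    obtain q where q: "fst (cs ! (i + t)) = q # fst (cs ! Suc (i + t))" "rq (i + t) = q # rq (Suc (i + t))"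
      using pop_step[of "i + t"] l1 l0 t len by fastforce
    have "rq (i + t) = (i0 + t) # [i0 + Suc t..<i0 + n]" using R t by (simp add: upt_conv_Cons)
    thus "fst (cs ! (i + t)) = (i0 + t) # fst (cs ! Suc (i + t))" using q by simp
  qed
qed

lemma matched_intro: "k < length w \<Longrightarrow> fst (cs ! k) = p # fst (cs ! Suc k) \<Longrightarrow> matched cs p k"
  unfolding matched_def using snd_cs[of k] len_cs by (intro exI[of _ k]) simp

end


definition Bk :: "(nat \<Rightarrow> sym list) \<Rightarrow> nat \<Rightarrow> sym list" where "Bk Z l = v_blk l @ Z l @ v_blk l"
definition Wd :: "sym list \<Rightarrow> (nat \<Rightarrow> sym list) \<Rightarrow> nat \<Rightarrow> sym list" where
  "Wd P Z N = P @ concat (map (Bk Z) [1..<N+1])"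
definition st :: "sym list \<Rightarrow> (nat \<Rightarrow> sym list) \<Rightarrow> nat \<Rightarrow> nat" where
  "st P Z l = length P + length (concat (map (Bk Z) [1..<l]))"

lemma st_Suc: "1 \<le> l \<Longrightarrow> st P Z (Suc l) = st P Z l + length (Bk Z l)"
  by (simp add: st_def)

lemma st_one: "st P Z 1 = length P" by (simp add: st_def)
lemma st_one': "st P Z (Suc 0) = length P" by (simp add: st_def)

lemma st_end: "st P Z (Suc N) = length (Wd P Z N)" by (simp add: st_def Wd_def)

lemma Wd_split: "1 \<le> l \<Longrightarrow> l \<le> N \<Longrightarrow> \<exists>post. Wd P Z N = take (st P Z l) (Wd P Z N) @ Bk Z l @ post \<and> length (take (st P Z l) (Wd P Z N)) = st P Z l"
proof -
  assume l: "1 \<le> l" "l \<le> N"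
  have "[1..<N+1] = [1..<l] @ [l..<N+1]" using upt_add_eq_append[of 1 l "N+1-l"] l by simp
  moreover have "[l..<N+1] = l # [Suc l..<N+1]" using l by (simp add: upt_conv_Cons)
  ultimately have W: "Wd P Z N = (P @ concat (map (Bk Z) [1..<l])) @ Bk Z l @ concat (map (Bk Z) [Suc l..<N+1])"
    by (simp add: Wd_def)
  have "length (P @ concat (map (Bk Z) [1..<l])) = st P Z l" by (simp add: st_def)
  hence "take (st P Z l) (Wd P Z N) = P @ concat (map (Bk Z) [1..<l])" using W by (metis append_eq_conv_conj)
  thus ?thesis using W \<open>length (P @ concat (map (Bk Z) [1..<l])) = st P Z l\<close> by auto
qed

lemma drop_st: "1 \<le> l \<Longrightarrow> l \<le> N \<Longrightarrow> \<exists>post. drop (st P Z l) (Wd P Z N) = Bk Z l @ post"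
proof -
  assume l: "1 \<le> l" "l \<le> N"
  then obtain post where "Wd P Z N = take (st P Z l) (Wd P Z N) @ Bk Z l @ post" "length (take (st P Z l) (Wd P Z N)) = st P Z l"
    using Wd_split by blast
  thus ?thesis by (metis append_eq_conv_conj)
qed

lemma Wd_Suc: "Wd P Z (Suc N) = Wd P Z N @ Bk Z (Suc N)"
  by (simp add: Wd_def)

lemma v_len: "length (v_blk l) = 2 * l + 2" by (simp add: v_blk_def)

lemma v_nth: "i < length (v_blk l) \<Longrightarrow> v_blk l ! i = (if i = 0 then SC1 else if i \<le> l then SX else if i \<le> 2 * l then SY else SC2)"
  by (auto simp: v_blk_def nth_append nth_Cons')

lemma v_inj:
  assumes l: "1 \<le> l" "1 \<le> l'" and t: "take (length (v_blk l)) (v_blk l' @ post) = v_blk l"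
  shows "l = l'"
proof (rule ccontr)
  assume ne: "l \<noteq> l'"
  have nth_eq: "\<And>i. i < length (v_blk l) \<Longrightarrow> i < length (v_blk l') \<Longrightarrow> v_blk l ! i = v_blk l' ! i"
  proof -
    fix i assume i: "i < length (v_blk l)" "i < length (v_blk l')"
    have "take (length (v_blk l)) (v_blk l' @ post) ! i = (v_blk l' @ post) ! i" using i(1) by (rule nth_take)
    moreover have "(v_blk l' @ post) ! i = v_blk l' ! i" using i(2) by (simp add: nth_append)
    ultimately show "v_blk l ! i = v_blk l' ! i" using t by metis
  qed
  show False
  proof (cases "l < l'")
    case True
    have "v_blk l ! (l+1) = v_blk l' ! (l+1)" using nth_eq True l by (simp add: v_len)
    thus False using True l by (simp add: v_nth v_len)
  next
    case False
    hence "l' < l" using ne by simp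
    have "v_blk l ! (l'+1) = v_blk l' ! (l'+1)" using nth_eq \<open>l' < l\<close> l by (simp add: v_len)
    thus False using \<open>l' < l\<close> l by (simp add: v_nth v_len)
  qed
qed

lemma c1_pos:
  assumes P: "SC1 \<notin> set P" and Z: "\<And>l. SC1 \<notin> set (Z l)"
  shows "p < length (Wd P Z N) \<Longrightarrow> Wd P Z N ! p = SC1 \<Longrightarrow>
    \<exists>l. 1 \<le> l \<and> l \<le> N \<and> (p = st P Z l \<or> p = st P Z l + length (v_blk l) + length (Z l))"
proof (induction N)
  case 0
  hence "P ! p = SC1" "p < length P" by (simp_all add: Wd_def)
  thus ?case using P by (metis nth_mem)
next
  case (Suc N)
  show ?case
  proof (cases "p < length (Wd P Z N)")
    case True
    hence "Wd P Z N ! p = SC1" using Suc.prems by (simp add: Wd_Suc nth_append)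
    thus ?thesis using Suc.IH True by force
  next
    case False
    define o' where "o' = p - length (Wd P Z N)"
    have p: "p = st P Z (Suc N) + o'" using False st_end o'_def by simp
    have o1: "o' < length (Bk Z (Suc N))" using Suc.prems False o'_def by (simp add: Wd_Suc)
    have o2: "Bk Z (Suc N) ! o' = SC1" using Suc.prems False o'_def by (simp add: Wd_Suc nth_append)
    have "o' = 0 \<or> o' = length (v_blk (Suc N)) + length (Z (Suc N))"
    proof (cases "o' < length (v_blk (Suc N))")
      case True
      hence "v_blk (Suc N) ! o' = SC1" using o2 by (simp add: Bk_def nth_append)
      thus ?thesis using True by (simp add: v_nth split: if_splits)
    next
      case F1: False
      show ?thesis
      proof (cases "o' < length (v_blk (Suc N)) + length (Z (Suc N))")
        case True
        have lt: "o' - length (v_blk (Suc N)) < length (Z (Suc N))" using True F1 by simp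
        have "Z (Suc N) ! (o' - length (v_blk (Suc N))) = SC1" using o2 F1 lt by (simp add: Bk_def nth_append)
        moreover note lt
        ultimately show ?thesis using Z by (metis nth_mem)
      next
        case F2: False
        define r where "r = o' - length (v_blk (Suc N)) - length (Z (Suc N))"
        have nlt: "\<not> (o' - length (v_blk (Suc N)) < length (Z (Suc N)))" using F1 F2 by simp
        have "v_blk (Suc N) ! (o' - length (v_blk (Suc N)) - length (Z (Suc N))) = SC1"
          using o2 F1 nlt by (simp add: Bk_def nth_append)
        moreover have "r < length (v_blk (Suc N))" using o1 F1 F2 r_def by (simp add: Bk_def)
        ultimately have "v_blk (Suc N) ! r = SC1" "r < length (v_blk (Suc N))" using r_def by simp_all
        hence "r = 0" by (simp add: v_nth split: if_splits)
        thus ?thesis using F1 F2 r_def by simp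
      qed
    qed
    thus ?thesis using p by (intro exI[of _ "Suc N"]) auto
  qed
qed

lemma qrun_nil_eq: "qrun Q [] Q' \<Longrightarrow> Q' = Q"
  by (auto elim: qrun_NilE)

lemma filt_v: "filter cxy (v_blk l) = v_blk l"
  by (simp add: v_blk_def cxy_def)

locale wcomp = comp +
  fixes P :: "sym list" and Z :: "nat \<Rightarrow> sym list" and N :: nat
  assumes wdef: "w = Wd P Z N"
    and Pfree: "\<forall>c\<in>set P. \<not> cxy c"
    and Zfree: "\<And>l. \<forall>c\<in>set (Z l). \<not> cxy c"
begin

lemma filt_Z: "filter cxy (Z l) = []" using Zfree[of l] by (simp add: filter_empty_conv)

lemma filt_Bk: "filter cxy (Bk Z l) = v_blk l @ v_blk l" by (simp add: Bk_def filt_v filt_Z)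

lemma st_le: "1 \<le> l \<Longrightarrow> l \<le> N \<Longrightarrow> st P Z (Suc l) \<le> length w \<and> drop (st P Z l) w = Bk Z l @ drop (st P Z (Suc l)) w"
proof -
  assume l: "1 \<le> l" "l \<le> N"
  obtain post where W: "Wd P Z N = take (st P Z l) (Wd P Z N) @ Bk Z l @ post" "length (take (st P Z l) (Wd P Z N)) = st P Z l"
    using Wd_split[OF l] by blast
  have "length w = st P Z l + length (Bk Z l) + length post" using W wdef by (metis length_append add.assoc)
  moreover have "drop (st P Z l) w = Bk Z l @ post" using W wdef by (metis append_eq_conv_conj)
  moreover have "drop (st P Z (Suc l)) w = post" using calculation st_Suc[OF l(1)] by (metis drop_drop append_eq_conv_conj add.commute)
  ultimately show ?thesis using st_Suc[OF l(1)] by simp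
qed

lemma block_run: "1 \<le> l \<Longrightarrow> l \<le> N \<Longrightarrow> qrun (sq (st P Z l)) (v_blk l @ v_blk l) (sq (st P Z (Suc l)))"
proof -
  assume l: "1 \<le> l" "l \<le> N"
  have le: "st P Z (Suc l) \<le> length w" and dr: "drop (st P Z l) w = Bk Z l @ drop (st P Z (Suc l)) w"
    using st_le[OF l] by auto
  have "take (st P Z (Suc l) - st P Z l) (drop (st P Z l) w) = Bk Z l"
    using dr st_Suc[OF l(1)] by simp
  thus ?thesis using sq_run[of "st P Z l" "st P Z (Suc l)"] le st_Suc[OF l(1)] filt_Bk by simp
qed

lemma sq_first: "sq (st P Z 1) = []"
proof -
  have "length P \<le> length w" using wdef by (simp add: Wd_def)
  moreover have "filter cxy (take (length P) w) = []" using wdef Pfree by (simp add: Wd_def filter_empty_conv)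
  ultimately have "qrun (sq 0) [] (sq (length P))" using sq_run[of 0 "length P"] by simp
  hence "sq (length P) = sq 0" by (rule qrun_nil_eq)
  thus ?thesis using rq0 by (simp add: sq_def st_one st_one')
qed

lemma good_all: "1 \<le> l \<Longrightarrow> l \<le> Suc N \<Longrightarrow> Good l (sq (st P Z l))"
proof (induction l)
  case 0 thus ?case by simp
next
  case (Suc l)
  show ?case
  proof (cases "l = 0")
    case True thus ?thesis using sq_first by (simp add: Good_def)
  next
    case False
    hence l: "1 \<le> l" "l \<le> N" using Suc.prems by auto
    have g: "Good l (sq (st P Z l))" using Suc.IH l by simp
    show ?thesis using block_lemma[OF g l(1) block_run[OF l]] by simp
  qed
qed

lemma nonempty_prop: "1 \<le> l \<Longrightarrow> l + d = Suc N \<Longrightarrow> sq (st P Z l) \<noteq> [] \<Longrightarrow> sq (st P Z (Suc N)) \<noteq> []"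
proof (induction d arbitrary: l)
  case 0 thus ?case by simp
next
  case (Suc d)
  hence l: "1 \<le> l" "l \<le> N" by auto
  have "sq (st P Z (Suc l)) \<noteq> []"
    using block_lemma[OF good_all[of l] l(1) block_run[OF l]] l Suc.prems by simp
  thus ?case using Suc.IH[of "Suc l"] Suc.prems by simp
qed

lemma all_empty: "1 \<le> l \<Longrightarrow> l \<le> Suc N \<Longrightarrow> rq (st P Z l) = []"
proof -
  assume l: "1 \<le> l" "l \<le> Suc N"
  have e: "st P Z (Suc N) = length w" by (simp add: st_end wdef)
  have "sq (st P Z (Suc N)) = []" unfolding e using rqN by (simp add: sq_def)
  hence "sq (st P Z l) = []" using nonempty_prop[of l "Suc N - l"] l by force
  thus ?thesis by (simp add: sq_def)
qed

lemma matched_all: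
  assumes l: "1 \<le> l" "l \<le> N" and j: "j < length (v_blk l)"
  shows "matched cs (st P Z l + j) (st P Z l + length (v_blk l) + length (Z l) + j)"
proof -
  define i where "i = st P Z l"
  define V where "V = length (v_blk l)"
  have le: "st P Z (Suc l) \<le> length w" and dr: "drop i w = Bk Z l @ drop (st P Z (Suc l)) w"
    using st_le[OF l] i_def by auto
  have sS: "st P Z (Suc l) = i + V + length (Z l) + V" using st_Suc[OF l(1)] i_def V_def by (simp add: Bk_def)
  have r0: "rq i = []" using all_empty l i_def by simp
  have t1: "take V (drop i w) = v_blk l" using dr V_def by (simp add: Bk_def)
  have "qrun (sq i) (filter cxy (take V (drop i w))) (sq (i + V))"
    using sq_run[of i "i + V"] le sS by simp
  hence "qrun [] (v_blk l) (sq (i + V))" using t1 filt_v r0 by (simp add: sq_def)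
  hence "sq (i + V) = v_blk l" by (rule C0a)
  hence "length (rq (i + V)) = V" using V_def by (metis length_map sq_def)
  hence r1: "rq (i + V) = [i..<i + V]" using push_interval[OF r0] le sS by simp
  have "\<forall>t<length (Z l). \<not> cxy (w ! (i + V + t))"
  proof (intro allI impI)
    fix t assume t: "t < length (Z l)"
    have "w ! (i + V + t) = drop i w ! (V + t)" using le sS by (simp add: add.assoc)
    also have "\<dots> = Z l ! t" using dr t V_def by (simp add: Bk_def nth_append)
    finally show "\<not> cxy (w ! (i + V + t))" using Zfree[of l] t by (metis nth_mem)
  qed
  hence r2: "rq (i + V + length (Z l)) = [i..<i + V]" using const_interval[of "length (Z l)" "i + V"] le sS r1 by simp
  have r3: "rq (i + V + length (Z l) + V) = []" using all_empty[of "Suc l"] l sS by simp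
  have "\<forall>t<V. fst (cs ! (i + V + length (Z l) + t)) = (i + t) # fst (cs ! Suc (i + V + length (Z l) + t))"
    using pop_interval[OF r2 _ r3] le sS by simp
  hence "fst (cs ! (i + V + length (Z l) + j)) = (i + j) # fst (cs ! Suc (i + V + length (Z l) + j))"
    using j V_def by simp
  moreover have "i + V + length (Z l) + j < length w" using le sS j V_def by simp
  ultimately show ?thesis using matched_intro i_def V_def by (simp add: add.assoc)
qed

end


lemma occs_Wd:
  assumes P: "SC1 \<notin> set P" and Z: "\<And>l. SC1 \<notin> set (Z l)" and l: "1 \<le> l" "l \<le> N"
  shows "occs (v_blk l) (Wd P Z N) = {st P Z l, st P Z l + length (v_blk l) + length (Z l)}"
proof -
  have dr: "\<And>l. 1 \<le> l \<Longrightarrow> l \<le> N \<Longrightarrow>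
      (\<exists>post. drop (st P Z l) (Wd P Z N) = v_blk l @ post) \<and>
      (\<exists>post. drop (st P Z l + length (v_blk l) + length (Z l)) (Wd P Z N) = v_blk l @ post)"
  proof -
    fix l assume l: "1 \<le> l" "l \<le> N"
    obtain post where d: "drop (st P Z l) (Wd P Z N) = Bk Z l @ post" using drop_st[OF l] by blast
    have "drop (st P Z l + length (v_blk l) + length (Z l)) (Wd P Z N) = drop (length (v_blk l) + length (Z l)) (Bk Z l @ post)"
      using d by (metis add.assoc drop_drop add.commute)
    also have "\<dots> = v_blk l @ post" by (simp add: Bk_def)
    finally show "(\<exists>post. drop (st P Z l) (Wd P Z N) = v_blk l @ post) \<and>
      (\<exists>post. drop (st P Z l + length (v_blk l) + length (Z l)) (Wd P Z N) = v_blk l @ post)"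
      using d by (auto simp: Bk_def)
  qed
  have in_occ: "\<And>p post. drop p (Wd P Z N) = v_blk l @ post \<Longrightarrow> p \<in> occs (v_blk l) (Wd P Z N)"
  proof -
    fix p post assume d: "drop p (Wd P Z N) = v_blk l @ post"
    have "length (drop p (Wd P Z N)) \<ge> length (v_blk l)" using d by simp
    moreover have "drop p (Wd P Z N) \<noteq> []" using d by (simp add: v_blk_def)
    ultimately have "p + length (v_blk l) \<le> length (Wd P Z N)" by simp
    thus "p \<in> occs (v_blk l) (Wd P Z N)" using d by (simp add: occs_def)
  qed
  show ?thesis
  proof
    show "{st P Z l, st P Z l + length (v_blk l) + length (Z l)} \<subseteq> occs (v_blk l) (Wd P Z N)"
      using dr[OF l] in_occ by blast
  next
    show "occs (v_blk l) (Wd P Z N) \<subseteq> {st P Z l, st P Z l + length (v_blk l) + length (Z l)}"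
    proof
      fix p assume p: "p \<in> occs (v_blk l) (Wd P Z N)"
      hence pl: "p + length (v_blk l) \<le> length (Wd P Z N)" and tk: "take (length (v_blk l)) (drop p (Wd P Z N)) = v_blk l"
        by (auto simp: occs_def)
      have vpos: "0 < length (v_blk l)" by (simp add: v_len)
      have plt: "p < length (Wd P Z N)" using pl vpos by linarith
      have "take (length (v_blk l)) (drop p (Wd P Z N)) ! 0 = drop p (Wd P Z N) ! 0" using vpos by (rule nth_take)
      hence a: "v_blk l ! 0 = drop p (Wd P Z N) ! 0" using tk by simp
      have b: "drop p (Wd P Z N) ! 0 = Wd P Z N ! p" using plt by simp
      have c: "v_blk l ! 0 = SC1" by (simp add: v_blk_def)
      have "Wd P Z N ! p = SC1" using a b c by simp
      then obtain l' where l': "1 \<le> l'" "l' \<le> N" and pp: "p = st P Z l' \<or> p = st P Z l' + length (v_blk l') + length (Z l')"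
        using c1_pos[OF P Z plt] by blast
      obtain post where "drop p (Wd P Z N) = v_blk l' @ post" using dr[OF l'] pp by blast
      hence "take (length (v_blk l)) (v_blk l' @ post) = v_blk l" using tk by simp
      hence "l = l'" using v_inj l(1) l'(1) by blast
      thus "p \<in> {st P Z l, st P Z l + length (v_blk l) + length (Z l)}" using pp by simp
    qed
  qed
qed

lemma first_second: "a < b \<Longrightarrow> occs u W = {a, b} \<Longrightarrow> first_occ u W = a \<and> second_occ u W = b"
  by (simp add: first_occ_def second_occ_def insert_Diff_if)

context wcomp
begin

lemma V_Wd:
  assumes l: "1 \<le> l" "l \<le> N" and j: "j < length (v_blk l)"
  shows "matched cs (first_occ (v_blk l) w + j) (second_occ (v_blk l) w + j)"
proof -
  have P1: "SC1 \<notin> set P" using Pfree by (auto simp: cxy_def)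
  have Z1: "\<And>l. SC1 \<notin> set (Z l)" using Zfree by (auto simp: cxy_def)
  have "occs (v_blk l) w = {st P Z l, st P Z l + length (v_blk l) + length (Z l)}"
    using occs_Wd[OF P1 Z1 l] wdef by simp
  moreover have "st P Z l < st P Z l + length (v_blk l) + length (Z l)" by (simp add: v_len)
  ultimately have "first_occ (v_blk l) w = st P Z l \<and> second_occ (v_blk l) w = st P Z l + length (v_blk l) + length (Z l)"
    using first_second by blast
  thus ?thesis using matched_all[OF l j] by simp
qed

end


definition Zb :: "nat \<Rightarrow> nat list \<Rightarrow> nat \<Rightarrow> sym list" where
  "Zb m ns l = (if l mod 4 = 1 \<or> l mod 4 = 2 then D_blk m ns ((l + 3) div 4)
     else if l mod 4 = 3 then E_blk m ns ((l + 3) div 4) else F_blk m ns ((l + 3) div 4))"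

lemma Zb1: "Zb m ns (4 * k + 1) = D_blk m ns (Suc k)"
proof -
  have "(4*k+1) mod 4 = 1" "(4*k+1+3) div 4 = Suc k" by presburger+
  thus ?thesis unfolding Zb_def by simp
qed
lemma Zb2: "Zb m ns (4 * k + 2) = D_blk m ns (Suc k)"
proof -
  have "(4*k+2) mod 4 = 2" "(4*k+2+3) div 4 = Suc k" by presburger+
  thus ?thesis unfolding Zb_def by simp
qed
lemma Zb3: "Zb m ns (4 * k + 3) = E_blk m ns (Suc k)"
proof -
  have "(4*k+3) mod 4 = 3" "(4*k+3+3) div 4 = Suc k" by presburger+
  thus ?thesis unfolding Zb_def by simp
qed
lemma Zb4: "Zb m ns (4 * k + 4) = F_blk m ns (Suc k)"
proof -
  have "(4*k+4) mod 4 = 0" "(4*k+4+3) div 4 = Suc k" by presburger+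
  thus ?thesis unfolding Zb_def by simp
qed

lemma Ver_eq: "concat (map (\<lambda>k.
       v_blk (4*k-3) @ D_blk m ns k @ v_blk (4*k-3) @
       v_blk (4*k-2) @ D_blk m ns k @ v_blk (4*k-2) @
       v_blk (4*k-1) @ E_blk m ns k @ v_blk (4*k-1) @
       v_blk (4*k)   @ F_blk m ns k @ v_blk (4*k)) [1..<M+1]) = concat (map (Bk (Zb m ns)) [1..<4*M+1])"
  (is "concat (map ?f _) = _")
proof (induction M)
  case 0 thus ?case by simp
next
  case (Suc M)
  have u1: "[1..<Suc M + 1] = [1..<M+1] @ [Suc M]" by simp
  have u2: "[1..<4 * Suc M + 1] = [1..<4*M+1] @ [4*M+1, 4*M+2, 4*M+3, 4*M+4]"
  proof -
    have "[1..<4 * Suc M + 1] = [1..<4*M+1] @ [4*M+1..<4*M+1+4]"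
      using upt_add_eq_append[of 1 "4*M+1" 4] by simp
    moreover have "[4*M+1..<4*M+1+4] = [4*M+1, 4*M+2, 4*M+3, 4*M+4]" by (simp add: upt_rec)
    ultimately show ?thesis by simp
  qed
  have e: "4 * Suc M - 3 = 4*M+1" "4 * Suc M - 2 = 4*M+2" "4 * Suc M - 1 = 4*M+3" "4 * Suc M = 4*M+4" by simp_all
  have e2: "4*M+4-3 = 4*M+1" "4*M+4-2 = 4*M+2" "4*M+4-1 = 4*M+3" by simp_all
  have f: "?f (Suc M) = Bk (Zb m ns) (4*M+1) @ Bk (Zb m ns) (4*M+2) @ Bk (Zb m ns) (4*M+3) @ Bk (Zb m ns) (4*M+4)"
    unfolding Bk_def Zb1 Zb2 Zb3 Zb4 by (simp only: e e2 append_assoc)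
  have "concat (map ?f [1..<Suc M + 1]) = concat (map ?f [1..<M+1]) @ ?f (Suc M)"
    unfolding u1 by simp
  also have "\<dots> = concat (map (Bk (Zb m ns)) [1..<4*M+1]) @ ?f (Suc M)" using Suc.IH by simp
  also have "\<dots> = concat (map (Bk (Zb m ns)) [1..<4 * Suc M + 1])"
    unfolding u2 f by simp
  finally show ?case .
qed

lemma set_pw: "set (pw u i) \<subseteq> set u" by (auto simp: pw_def)

lemma cxy_free_U: "c \<in> set (pw (U_blk n) i) \<Longrightarrow> \<not> cxy c"
  using set_pw[of "U_blk n" i] by (auto simp: U_blk_def cxy_def)

lemma Zb_free: "\<forall>c\<in>set (Zb m ns l). \<not> cxy c"
  by (auto simp: Zb_def D_blk_def E_blk_def F_blk_def cxy_def dest: cxy_free_U)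

lemma Pre_free: "\<forall>c\<in>set (Load m ns @ Dist m ns). \<not> cxy c"
proof -
  have "\<forall>c\<in>set (Load m ns). \<not> cxy c" by (auto simp: Load_def cxy_def)
  moreover have "\<forall>c\<in>set (Dist m ns). \<not> cxy c"
  proof -
    have "\<And>c. c \<in> set (pw ([SA1] @ replicate (bound_B m ns) SB @ [SA2]) 3) \<Longrightarrow> \<not> cxy c"
      using set_pw[of "[SA1] @ replicate (bound_B m ns) SB @ [SA2]" 3] by (auto simp: cxy_def)
    thus ?thesis by (auto simp: Dist_def cxy_def)
  qed
  ultimately show ?thesis by auto
qed

lemma w_S_Wd: "w_S m ns = Wd (Load m ns @ Dist m ns) (Zb m ns) (12 * m)"
proof -
  have "Ver m ns = concat (map (Bk (Zb m ns)) [1..<4*(3*m)+1])"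
    unfolding Ver_def using Ver_eq[of m ns "3*m"] by simp
  thus ?thesis by (simp add: w_S_def Wd_def)
qed

theorem theorem2:
  assumes "three_partition_instance m ns"
      and "accepting_comp (w_S m ns) cs"
  shows "V_condition m ns cs"
proof -
  interpret wcomp "w_S m ns" cs "Load m ns @ Dist m ns" "Zb m ns" "12 * m"
    using assms(2) w_S_Wd Pre_free Zb_free by unfold_locales auto
  show ?thesis unfolding V_condition_def using V_Wd by blast
qed


end
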